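(* Let $F_3$ be the free group on the generators $a,b,c$, and let $\sigma_1,\sigma_2$ be substitutions on the alphabet $\{a,b,c\}$ (each letter is mapped to a nonempty finite word in $a,b,c$ using only positive powers), each extended to an endomorphism of $F_3$, and assume each $\sigma_i$ acts as an automorphism of $F_3$. Assume that the substitution (abelianisation) matrix of $\sigma_1$ is primitive and unimodular, has irreducible characteristic polynomial, and has a Perron–Frobenius eigenvalue which is a Pisot number. Suppose there exists a fixed element $w\in F_3$ such that $\sigma_1(g)=w^{-1}\sigma_2(g)\,w$ for every generator $g\in\{a,b,c\}$. Then the tilings (equivalently, the bi-infinite sequences) generated by $\sigma_1$ and $\sigma_2$ are locally isomorphic, i.e. they have exactly the same finite subpatterns: the language of $\sigma_1$ equals the language of $\sigma_2$.
   Context: The substitution matrix of $\sigma$ is the $3\times 3$ matrix whose $(i,j)$ entry counts the occurrences of letter $i$ in $\sigma(j)$. The language of a substitution $\sigma$ is the set of all finite words occurring as factors (subwords) of $\sigma^n(x)$ for some $n\ge 0$ and some letter $x\in\{a,b,c\}$. The tilings generated by $\sigma$ are the geometric realisations of the bi-infinite sequences whose finite factors all lie in this language, with tile $i$ an interval of length equal to the $i$-th component of the left Perron–Frobenius eigenvector of the substitution matrix. Two tilings (or sequences) are locally isomorphic (LI) if every finite subpattern of one occurs in the other and vice versa. *)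

theory Defs
  imports "Jordan_Normal_Form.Spectral_Radius" "Jordan_Normal_Form.Char_Poly"
    "HOL-Computational_Algebra.Polynomial_Factorial"
begin

datatype letter = La | Lb | Lc

definition abc :: "letter list" where "abc = [La, Lb, Lc]"

type_synonym subst = "letter \<Rightarrow> letter list"

definition is_subst :: "subst \<Rightarrow> bool" where
  "is_subst \<sigma> \<longleftrightarrow> (\<forall>x. \<sigma> x \<noteq> [])"

text \<open>Free group F_3 on a,b,c: elements are freely reduced words over
  letters with signs (True = positive power, False = inverse).\<close>
type_synonym fword = "(letter \<times> bool) list"

fun push :: "letter \<times> bool \<Rightarrow> fword \<Rightarrow> fword" where
  "push x [] = [x]"
| "push x (y # ys) = (if fst x = fst y \<and> snd x \<noteq> snd y then ys else x # y # ys)"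

definition fnorm :: "fword \<Rightarrow> fword" where
  "fnorm w = rev (foldl (\<lambda>s x. push x s) [] w)"

definition reduced :: "fword \<Rightarrow> bool" where
  "reduced w \<longleftrightarrow> (\<forall>i. Suc i < length w \<longrightarrow>
      \<not> (fst (w ! i) = fst (w ! Suc i) \<and> snd (w ! i) \<noteq> snd (w ! Suc i)))"

definition F3 :: "fword set" where "F3 = {w. reduced w}"

definition fmult :: "fword \<Rightarrow> fword \<Rightarrow> fword" where
  "fmult u v = fnorm (u @ v)"

definition finv :: "fword \<Rightarrow> fword" where
  "finv w = rev (map (\<lambda>(x, b). (x, \<not> b)) w)"

definition pos :: "letter list \<Rightarrow> fword" where
  "pos u = map (\<lambda>x. (x, True)) u"

definition fext :: "subst \<Rightarrow> fword \<Rightarrow> fword" where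
  "fext \<sigma> w = fnorm (concat (map (\<lambda>(x, b). if b then pos (\<sigma> x) else finv (pos (\<sigma> x))) w))"

definition is_automorphism :: "subst \<Rightarrow> bool" where
  "is_automorphism \<sigma> \<longleftrightarrow> bij_betw (fext \<sigma>) F3 F3"

definition subst_matrix :: "subst \<Rightarrow> int mat" where
  "subst_matrix \<sigma> = mat 3 3 (\<lambda>(i, j). int (count_list (\<sigma> (abc ! j)) (abc ! i)))"

definition primitive_mat :: "int mat \<Rightarrow> bool" where
  "primitive_mat M \<longleftrightarrow> (\<forall>i<dim_row M. \<forall>j<dim_col M. M $$ (i, j) \<ge> 0) \<and>
     (\<exists>k>0. \<forall>i<dim_row M. \<forall>j<dim_col M. (M ^\<^sub>m k) $$ (i, j) > 0)"

definition unimodular :: "int mat \<Rightarrow> bool" where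
  "unimodular M \<longleftrightarrow> \<bar>det M\<bar> = 1"

definition pf_eigenvalue :: "int mat \<Rightarrow> real" where
  "pf_eigenvalue M = spectral_radius (map_mat of_int M)"

definition pisot :: "real \<Rightarrow> bool" where
  "pisot r \<longleftrightarrow> r > 1 \<and> (\<exists>p :: int poly. lead_coeff p = 1 \<and> irreducible p \<and>
      poly (map_poly of_int p) r = 0 \<and>
      (\<forall>z::complex. poly (map_poly of_int p) z = 0 \<longrightarrow> z \<noteq> complex_of_real r \<longrightarrow> cmod z < 1))"

definition apply_subst :: "subst \<Rightarrow> letter list \<Rightarrow> letter list" where
  "apply_subst \<sigma> w = concat (map \<sigma> w)"

definition factor :: "'a list \<Rightarrow> 'a list \<Rightarrow> bool" where
  "factor u v \<longleftrightarrow> (\<exists>p s. v = p @ u @ s)"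

definition language :: "subst \<Rightarrow> letter list set" where
  "language \<sigma> = {u. \<exists>n x. factor u ((apply_subst \<sigma> ^^ n) [x])}"

end

theory Submission
  imports Defs
begin


definition canc :: "letter \<times> bool \<Rightarrow> letter \<times> bool \<Rightarrow> bool" where
  "canc x y \<longleftrightarrow> fst x = fst y \<and> snd x \<noteq> snd y"

lemma reduced_Nil[simp]: "reduced []" by (simp add: reduced_def)

lemma reduced_Cons: "reduced (x # ys) \<longleftrightarrow> reduced ys \<and> (ys \<noteq> [] \<longrightarrow> \<not> canc x (hd ys))"
proof
  assume r: "reduced (x # ys)"
  have "reduced ys" unfolding reduced_def
  proof (intro allI impI)
    fix i assume "Suc i < length ys"
    with r[unfolded reduced_def, rule_format, of "Suc i"] show "\<not> (fst (ys ! i) = fst (ys ! Suc i) \<and> snd (ys ! i) \<noteq> snd (ys ! Suc i))" by simp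
  qed
  moreover have "ys \<noteq> [] \<longrightarrow> \<not> canc x (hd ys)"
    using r[unfolded reduced_def, rule_format, of 0] by (cases ys) (auto simp: canc_def)
  ultimately show "reduced ys \<and> (ys \<noteq> [] \<longrightarrow> \<not> canc x (hd ys))" by blast
next
  assume a: "reduced ys \<and> (ys \<noteq> [] \<longrightarrow> \<not> canc x (hd ys))"
  show "reduced (x # ys)" unfolding reduced_def
  proof (intro allI impI)
    fix i assume i: "Suc i < length (x # ys)"
    show "\<not> (fst ((x#ys) ! i) = fst ((x#ys) ! Suc i) \<and> snd ((x#ys) ! i) \<noteq> snd ((x#ys) ! Suc i))"
    proof (cases i)
      case 0 then show ?thesis using a i by (cases ys) (auto simp: canc_def)
    next
      case (Suc j) then show ?thesis using a i by (auto simp: reduced_def)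
    qed
  qed
qed

lemma reduced_append: "reduced (xs @ ys) \<longleftrightarrow> reduced xs \<and> reduced ys \<and> (xs \<noteq> [] \<longrightarrow> ys \<noteq> [] \<longrightarrow> \<not> canc (last xs) (hd ys))"
  by (induction xs) (auto simp: reduced_Cons)

abbreviation pf where "pf \<equiv> (\<lambda>s x. push x s)"

lemma canc_sym: "canc x y = canc y x" by (auto simp: canc_def)

lemma fold_red: "reduced (rev s @ w) \<Longrightarrow> foldl pf s w = rev w @ s"
proof (induction w arbitrary: s)
  case Nil then show ?case by simp
next
  case (Cons x w)
  have "push x s = x # s"
    using Cons.prems by (cases s) (auto simp: reduced_append reduced_Cons canc_def)
  then show ?case using Cons.IH[of "x # s"] Cons.prems by simp
qed

lemma push_inv: "reduced (rev s) \<Longrightarrow> reduced (rev (push x s))"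
  by (cases s) (auto simp: reduced_append reduced_Cons canc_def)

lemma fold_inv: "reduced (rev s) \<Longrightarrow> reduced (rev (foldl pf s w))"
  by (induction w arbitrary: s) (auto simp: push_inv)

lemma fnorm_reduced: "reduced (fnorm w)"
  unfolding fnorm_def using fold_inv[of "[]" w] by simp

lemma fnorm_id: "reduced w \<Longrightarrow> fnorm w = w"
  unfolding fnorm_def using fold_red[of "[]" w] by simp

lemma fnorm_left: "fnorm (fnorm u @ v) = fnorm (u @ v)"
proof -
  have "foldl pf [] (fnorm u) = foldl pf [] u"
    using fold_red[of "[]" "fnorm u"] fnorm_reduced[of u] by (simp add: fnorm_def)
  then show ?thesis by (simp add: fnorm_def)
qed

lemma push_canc: "canc x y \<Longrightarrow> push x (y # ys) = ys"
  by (simp add: canc_def)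
lemma push_nocanc: "\<not> canc x y \<Longrightarrow> push x (y # ys) = x # y # ys"
  by (simp add: canc_def)

lemma fold_cancel: assumes r: "reduced (rev s)" shows "foldl pf s [x, (fst x, \<not> snd x)] = s"
proof -
  define x' where "x' = (fst x, \<not> snd x)"
  have cx: "canc x' x" unfolding x'_def canc_def by simp
  have f: "foldl pf s [x, x'] = push x' (push x s)" by simp
  show ?thesis
  proof (cases "\<exists>y ys. s = y # ys \<and> canc x y")
    case True
    then obtain y ys where s: "s = y # ys" and c: "canc x y" by blast
    have yx: "y = x'" using c unfolding x'_def canc_def by (cases x, cases y) auto
    have "reduced (rev ys @ [y])" using r s by simp
    then have c0: "ys \<noteq> [] \<Longrightarrow> \<not> canc (last (rev ys)) y" by (simp add: reduced_append)
    have c1: "ys \<noteq> [] \<Longrightarrow> \<not> canc (hd ys) y" using c0 by (metis last_rev)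
    have "push x' ys = s"
    proof (cases ys)
      case Nil then show ?thesis using s yx by simp
    next
      case (Cons z zs)
      have "\<not> canc x' z" using c1 Cons yx canc_sym by fastforce
      then show ?thesis using s yx Cons push_nocanc by simp
    qed
    then show ?thesis using f s c push_canc x'_def by simp
  next
    case False
    have "push x s = x # s"
    proof (cases s)
      case Nil then show ?thesis by simp
    next
      case (Cons y ys) then show ?thesis using False push_nocanc by blast
    qed
    then show ?thesis using f cx push_canc x'_def by simp
  qed
qed

lemma fnorm_cancel: "fnorm (A @ [x, (fst x, \<not> snd x)] @ B) = fnorm (A @ B)"
proof -
  have "foldl pf (foldl pf [] A) [x, (fst x, \<not> snd x)] = foldl pf [] A"
    by (rule fold_cancel) (use fold_inv[of "[]" A] in simp)
  then show ?thesis unfolding fnorm_def by (metis foldl_append)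
qed



lemma ap_append[simp]: "apply_subst \<tau> (u @ v) = apply_subst \<tau> u @ apply_subst \<tau> v"
  by (simp add: apply_subst_def)
lemma ap_Cons: "apply_subst \<tau> (x # v) = \<tau> x @ apply_subst \<tau> v"
  by (simp add: apply_subst_def)
lemma ap_Nil[simp]: "apply_subst \<tau> [] = []"
  by (simp add: apply_subst_def)
lemma ap_single[simp]: "apply_subst \<tau> [x] = \<tau> x"
  by (simp add: apply_subst_def)

lemma it_append[simp]: "(apply_subst \<tau> ^^ n) (u @ v) = (apply_subst \<tau> ^^ n) u @ (apply_subst \<tau> ^^ n) v"
  by (induction n) auto

lemma it_ne: "is_subst \<tau> \<Longrightarrow> u \<noteq> [] \<Longrightarrow> (apply_subst \<tau> ^^ n) u \<noteq> []"
proof (induction n)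
  case (Suc n)
  then obtain c v where "(apply_subst \<tau> ^^ n) u = c # v" by (cases "(apply_subst \<tau> ^^ n) u") auto
  then show ?case using Suc.prems by (simp add: ap_Cons is_subst_def)
qed simp

lemma factor_trans: "factor u v \<Longrightarrow> factor v w \<Longrightarrow> factor u w"
  unfolding factor_def by (metis append.assoc)

lemma factor_it: "factor u v \<Longrightarrow> factor ((apply_subst \<tau> ^^ n) u) ((apply_subst \<tau> ^^ n) v)"
  unfolding factor_def by (metis it_append)

lemma lang_factor: "factor u v \<Longrightarrow> v \<in> language \<tau> \<Longrightarrow> u \<in> language \<tau>"
  unfolding language_def using factor_trans by blast

lemma lang_letter: "[x] \<in> language \<tau>"
  unfolding language_def factor_def
  by (rule CollectI, rule exI[of _ 0], rule exI[of _ x], rule exI[of _ "[]"], rule exI[of _ "[]"], simp)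

lemma lang_ap: "u \<in> language \<tau> \<Longrightarrow> apply_subst \<tau> u \<in> language \<tau>"
proof -
  assume "u \<in> language \<tau>"
  then obtain n x where "factor u ((apply_subst \<tau> ^^ n) [x])" unfolding language_def by blast
  then have "factor (apply_subst \<tau> u) ((apply_subst \<tau> ^^ Suc n) [x])"
    using factor_it[of _ _ 1 \<tau>] by simp
  then show ?thesis unfolding language_def by blast
qed

lemma lang_it: "factor u ((apply_subst \<tau> ^^ n) [x]) \<Longrightarrow> u \<in> language \<tau>"
  unfolding language_def by blast

definition rextd :: "subst \<Rightarrow> bool" where "rextd \<tau> \<longleftrightarrow> (\<forall>x. \<exists>z k y. factor [x, y] ((apply_subst \<tau> ^^ k) [z]))"
definition lextd :: "subst \<Rightarrow> bool" where "lextd \<tau> \<longleftrightarrow> (\<forall>x. \<exists>z k y. factor [y, x] ((apply_subst \<tau> ^^ k) [z]))"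

lemma it_add: "(apply_subst \<tau> ^^ n) ((apply_subst \<tau> ^^ k) u) = (apply_subst \<tau> ^^ (n + k)) u"
  by (simp add: funpow_add)

lemma lang_rext: assumes "is_subst \<tau>" "rextd \<tau>" "u \<in> language \<tau>" shows "\<exists>y. u @ [y] \<in> language \<tau>"
proof -
  obtain n x where f: "factor u ((apply_subst \<tau> ^^ n) [x])" using assms(3) unfolding language_def by blast
  then obtain p s where ps: "(apply_subst \<tau> ^^ n) [x] = p @ u @ s" unfolding factor_def by blast
  obtain z k y where zk: "factor [x, y] ((apply_subst \<tau> ^^ k) [z])" using assms(2) unfolding rextd_def by blast
  have "factor ((apply_subst \<tau> ^^ n) [x, y]) ((apply_subst \<tau> ^^ (n + k)) [z])"
    using factor_it[OF zk, where n=n] it_add by metis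
  moreover have "(apply_subst \<tau> ^^ n) [x, y] = (apply_subst \<tau> ^^ n) [x] @ (apply_subst \<tau> ^^ n) [y]"
    using it_append[where \<tau>=\<tau> and n=n and u="[x]" and v="[y]"] by simp
  moreover obtain c v where cv: "(apply_subst \<tau> ^^ n) [y] = c # v"
    using it_ne[OF assms(1), of "[y]" n] by (cases "(apply_subst \<tau> ^^ n) [y]") auto
  ultimately have "factor (p @ u @ s @ c # v) ((apply_subst \<tau> ^^ (n + k)) [z])" using ps by simp
  moreover have "factor (u @ [hd (s @ [c])]) (p @ u @ s @ c # v)"
    unfolding factor_def
    by (rule exI[of _ p], rule exI[of _ "if s = [] then v else tl s @ c # v"], cases s) auto
  ultimately show ?thesis using factor_trans lang_it by metis
qed

lemma lang_lext: assumes "is_subst \<tau>" "lextd \<tau>" "u \<in> language \<tau>" shows "\<exists>y. y # u \<in> language \<tau>"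
proof -
  obtain n x where f: "factor u ((apply_subst \<tau> ^^ n) [x])" using assms(3) unfolding language_def by blast
  then obtain p s where ps: "(apply_subst \<tau> ^^ n) [x] = p @ u @ s" unfolding factor_def by blast
  obtain z k y where zk: "factor [y, x] ((apply_subst \<tau> ^^ k) [z])" using assms(2) unfolding lextd_def by blast
  have "factor ((apply_subst \<tau> ^^ n) [y, x]) ((apply_subst \<tau> ^^ (n + k)) [z])"
    using factor_it[OF zk, where n=n] it_add by metis
  moreover have "(apply_subst \<tau> ^^ n) [y, x] = (apply_subst \<tau> ^^ n) [y] @ (apply_subst \<tau> ^^ n) [x]"
    using it_append[where \<tau>=\<tau> and n=n and u="[y]" and v="[x]"] by simp
  moreover obtain c v where cv: "(apply_subst \<tau> ^^ n) [y] = v @ [c]"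
    using it_ne[OF assms(1), of "[y]" n] by (cases "(apply_subst \<tau> ^^ n) [y]" rule: rev_cases) auto
  ultimately have F: "factor (v @ c # p @ u @ s) ((apply_subst \<tau> ^^ (n + k)) [z])" using ps by simp
  obtain p' e where pe: "c # p = p' @ [e]" by (cases "c # p" rule: rev_cases) auto
  have "v @ c # p @ u @ s = (v @ p') @ (e # u) @ s" using pe
    by (metis append.assoc append_Cons append_Nil)
  then have "factor (e # u) (v @ c # p @ u @ s)" unfolding factor_def by blast
  then show ?thesis using F factor_trans lang_it by metis
qed

lemma elem_sub:
  assumes ne: "is_subst \<tau>" and ext: "rextd \<tau>"
    and step: "\<And>u y. factor (apply_subst \<rho> u) (apply_subst \<tau> (u @ [y]))"
  shows "language \<rho> \<subseteq> language \<tau>"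
proof
  have key: "(apply_subst \<rho> ^^ n) [x] \<in> language \<tau>" for n x
  proof (induction n)
    case 0 then show ?case using lang_letter by simp
  next
    case (Suc n)
    obtain y where "(apply_subst \<rho> ^^ n) [x] @ [y] \<in> language \<tau>"
      using lang_rext[OF ne ext Suc] by blast
    then have "apply_subst \<tau> ((apply_subst \<rho> ^^ n) [x] @ [y]) \<in> language \<tau>" by (rule lang_ap)
    then show ?case using step lang_factor by simp blast
  qed
  fix u assume "u \<in> language \<rho>"
  then show "u \<in> language \<tau>" unfolding language_def[of \<rho>] using key lang_factor by blast
qed

lemma elem_sub2:
  assumes ne: "is_subst \<tau>" and ext: "lextd \<tau>"
    and step: "\<And>u y. factor (apply_subst \<rho> u) (apply_subst \<tau> (y # u))"
  shows "language \<rho> \<subseteq> language \<tau>"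
proof
  have key: "(apply_subst \<rho> ^^ n) [x] \<in> language \<tau>" for n x
  proof (induction n)
    case 0 then show ?case using lang_letter by simp
  next
    case (Suc n)
    obtain y where "y # (apply_subst \<rho> ^^ n) [x] \<in> language \<tau>"
      using lang_lext[OF ne ext Suc] by blast
    then have "apply_subst \<tau> (y # (apply_subst \<rho> ^^ n) [x]) \<in> language \<tau>" by (rule lang_ap)
    then show ?case using step lang_factor by simp blast
  qed
  fix u assume "u \<in> language \<rho>"
  then show "u \<in> language \<tau>" unfolding language_def[of \<rho>] using key lang_factor by blast
qed

lemma elem:
  assumes "is_subst \<tau>" "is_subst \<rho>" "rextd \<tau>" "lextd \<rho>"
    and t: "\<And>g. \<tau> g = l # t g" and r: "\<And>g. \<rho> g = t g @ [l]"
  shows "language \<tau> = language \<rho>"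
proof -
  have A: "apply_subst \<tau> u @ [l] = l # apply_subst \<rho> u" for u
    by (induction u) (auto simp: ap_Cons t r)
  show ?thesis
  proof
    show "language \<rho> \<subseteq> language \<tau>"
    proof (rule elem_sub[OF assms(1,3)])
      fix u y
      have "apply_subst \<tau> (u @ [y]) = [l] @ apply_subst \<rho> u @ t y"
        using A[of u] by (simp add: t)
      then show "factor (apply_subst \<rho> u) (apply_subst \<tau> (u @ [y]))"
        unfolding factor_def by blast
    qed
    show "language \<tau> \<subseteq> language \<rho>"
    proof (rule elem_sub2[OF assms(2,4)])
      fix u y
      have "apply_subst \<rho> (y # u) = t y @ apply_subst \<tau> u @ [l]"
        using A[of u] by (simp add: ap_Cons r)
      then show "factor (apply_subst \<tau> u) (apply_subst \<rho> (y # u))"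
        unfolding factor_def by blast
    qed
  qed
qed



lemma cnt_it: "count_list ((apply_subst \<tau> ^^ k) V) a =
  (\<Sum>l<3. count_list V (abc!l) * count_list ((apply_subst \<tau> ^^ k) [abc!l]) a)"
proof (induction V)
  case Nil
  have "(apply_subst \<tau> ^^ k) [] = []" by (induction k) auto
  then show ?case by simp
next
  case (Cons c V)
  have "(apply_subst \<tau> ^^ k) (c # V) = (apply_subst \<tau> ^^ k) [c] @ (apply_subst \<tau> ^^ k) V"
    using it_append[where u="[c]" and v=V] by simp
  then show ?case using Cons
    by (cases c) (simp_all add: numeral_3_eq_3 lessThan_Suc abc_def algebra_simps)
qed

lemma mat_pow: "i < 3 \<Longrightarrow> j < 3 \<Longrightarrow>
  (subst_matrix \<tau> ^\<^sub>m k) $$ (i,j) = int (count_list ((apply_subst \<tau> ^^ k) [abc!j]) (abc!i))"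
proof (induction k arbitrary: i j)
  case 0
  then show ?case
    by (auto simp: subst_matrix_def abc_def less_Suc_eq numeral_3_eq_3)
next
  case (Suc k)
  have "(subst_matrix \<tau> ^\<^sub>m Suc k) $$ (i,j) =
     (\<Sum>l\<in>{0..<3}. (subst_matrix \<tau> ^\<^sub>m k) $$ (i,l) * subst_matrix \<tau> $$ (l,j))"
    using Suc.prems by (simp add: subst_matrix_def scalar_prod_def)
  also have "\<dots> = (\<Sum>l\<in>{0..<3}. int (count_list ((apply_subst \<tau> ^^ k) [abc!l]) (abc!i)) *
       int (count_list (\<tau> (abc!j)) (abc!l)))"
    using Suc by (intro sum.cong) (auto simp: subst_matrix_def)
  also have "\<dots> = int (count_list ((apply_subst \<tau> ^^ k) (\<tau> (abc!j))) (abc!i))"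
    unfolding cnt_it[where \<tau>=\<tau> and k=k and V="\<tau> (abc!j)"] by (simp add: atLeast0LessThan algebra_simps)
  also have "(apply_subst \<tau> ^^ k) (\<tau> (abc!j)) = (apply_subst \<tau> ^^ Suc k) [abc!j]"
    by (simp only: funpow_Suc_right o_apply ap_single)
  finally show ?case .
qed

lemma letter_abc: "\<exists>i<3. x = abc ! i"
  by (cases x) (auto simp: abc_def intro: exI[of _ 0] exI[of _ 1] exI[of _ 2])

lemma prim_count: assumes "primitive_mat (subst_matrix \<tau>)"
  shows "\<exists>k. \<forall>x z. count_list ((apply_subst \<tau> ^^ k) [z]) x > 0"
proof -
  obtain k where k: "\<forall>i<3. \<forall>j<3. (subst_matrix \<tau> ^\<^sub>m k) $$ (i, j) > 0"
    using assms unfolding primitive_mat_def by (auto simp: subst_matrix_def)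
  have "count_list ((apply_subst \<tau> ^^ k) [z]) x > 0" for x z
  proof -
    obtain i where i: "i < 3" "x = abc ! i" using letter_abc by blast
    obtain j where j: "j < 3" "z = abc ! j" using letter_abc by blast
    show ?thesis using k[rule_format, OF i(1) j(1)] mat_pow[OF i(1) j(1), where \<tau>=\<tau> and k=k] i j by simp
  qed
  then show ?thesis by blast
qed

lemma count_pos_split: "count_list V x > 0 \<Longrightarrow> \<exists>p s. V = p @ x # s"
  by (metis count_notin less_irrefl split_list)

lemma prim_ext: assumes "is_subst \<tau>" "primitive_mat (subst_matrix \<tau>)"
  shows "rextd \<tau>" "lextd \<tau>"
proof -
  obtain k where k: "\<And>x z. count_list ((apply_subst \<tau> ^^ k) [z]) x > 0"
    using prim_count[OF assms(2)] by blast
  define V where "V = (apply_subst \<tau> ^^ k) [La]"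
  have ab: "count_list V La > 0" "count_list V Lb > 0" using k unfolding V_def by auto
  obtain c0 V' where V1: "V = c0 # V'" "V' \<noteq> []"
    using ab by (cases V; cases "tl V") (auto split: if_splits)
  obtain c1 V'' where V2: "V = V'' @ [c1]" "V'' \<noteq> []"
    using ab by (cases V rule: rev_cases; cases "butlast V" rule: rev_cases) (auto split: if_splits)
  have big: "(apply_subst \<tau> ^^ (k + k)) [La] = (apply_subst \<tau> ^^ k) V"
    unfolding V_def by (simp add: it_add)
  show "rextd \<tau>" unfolding rextd_def
  proof
    fix x
    obtain p s where ps: "(apply_subst \<tau> ^^ k) [c0] = p @ x # s" using count_pos_split[OF k[of c0 x]] by blast
    have "(apply_subst \<tau> ^^ k) V = (apply_subst \<tau> ^^ k) [c0] @ (apply_subst \<tau> ^^ k) V'"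
      using V1 it_append[where u="[c0]" and v=V'] by simp
    moreover obtain d r where "s @ (apply_subst \<tau> ^^ k) V' = d # r"
      using it_ne[OF assms(1) V1(2), of k] by (cases "s @ (apply_subst \<tau> ^^ k) V'") auto
    ultimately have "(apply_subst \<tau> ^^ (k + k)) [La] = p @ [x, d] @ r" using big ps by simp
    then show "\<exists>z k y. factor [x, y] ((apply_subst \<tau> ^^ k) [z])" unfolding factor_def by blast
  qed
  show "lextd \<tau>" unfolding lextd_def
  proof
    fix x
    obtain p s where ps: "(apply_subst \<tau> ^^ k) [c1] = p @ x # s" using count_pos_split[OF k[of c1 x]] by blast
    have "(apply_subst \<tau> ^^ k) V = (apply_subst \<tau> ^^ k) V'' @ (apply_subst \<tau> ^^ k) [c1]"
      using V2 by simp
    moreover obtain d r where "(apply_subst \<tau> ^^ k) V'' @ p = r @ [d]"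
      using it_ne[OF assms(1) V2(2), of k] by (cases "(apply_subst \<tau> ^^ k) V'' @ p" rule: rev_cases) auto
    ultimately have "(apply_subst \<tau> ^^ (k + k)) [La] = r @ [d, x] @ s" using big ps by simp
    then show "\<exists>z k y. factor [y, x] ((apply_subst \<tau> ^^ k) [z])" unfolding factor_def by blast
  qed
qed

lemma mat_eq: "(\<And>g. \<forall>a. count_list (\<tau> g) a = count_list (\<rho> g) a) \<Longrightarrow> subst_matrix \<tau> = subst_matrix \<rho>"
  unfolding subst_matrix_def by simp



lemma reduced_pos: "reduced (pos v)"
  by (induction v) (auto simp: pos_def reduced_Cons canc_def hd_map)

lemma reduced_rev: "reduced (rev xs) = reduced xs"
  by (induction xs) (auto simp: reduced_append reduced_Cons canc_sym last_rev)

lemma reduced_flip: "reduced (map (\<lambda>(x, b). (x, \<not> b)) w) = reduced w"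
  by (induction w) (auto simp: reduced_Cons canc_def hd_map split: prod.splits)

lemma reduced_finv: "reduced w \<Longrightarrow> reduced (finv w)"
  by (simp add: finv_def reduced_rev reduced_flip)

lemma finv_Cons: "finv (e # w) = finv w @ [(fst e, \<not> snd e)]"
  by (cases e) (simp add: finv_def)

lemma last_finv: "w \<noteq> [] \<Longrightarrow> last (finv w) = (fst (hd w), \<not> snd (hd w))"
  by (cases w) (auto simp: finv_def)

lemma finv_ne[simp]: "finv w = [] \<longleftrightarrow> w = []" by (simp add: finv_def)

lemma finv_Nil[simp]: "finv [] = []" by (simp add: finv_def)

lemma pos_contra: "pos u = fnorm X \<Longrightarrow> reduced X \<Longrightarrow> (l, False) \<in> set X \<Longrightarrow> False"
  using fnorm_id[of X] by (auto simp: pos_def)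

lemma pos_Nil[simp]: "pos [] = []" by (simp add: pos_def)
lemma pos_Cons: "pos (x # u) = (x, True) # pos u" by (simp add: pos_def)
lemma pos_append: "pos (u @ v) = pos u @ pos v" by (simp add: pos_def)
lemma pos_ne: "pos u \<noteq> [] \<longleftrightarrow> u \<noteq> []" by (simp add: pos_def)
lemma hd_pos: "u \<noteq> [] \<Longrightarrow> hd (pos u) = (hd u, True)" by (cases u) (simp_all add: pos_def)
lemma last_pos: "u \<noteq> [] \<Longrightarrow> last (pos u) = (last u, True)" by (simp add: pos_def last_map)

lemma step_T:
  assumes IH: "\<And>\<sigma>2. is_subst \<sigma>2 \<Longrightarrow> (\<forall>g. pos (\<sigma>1 g) = fnorm (finv w' @ pos (\<sigma>2 g) @ w')) \<Longrightarrow>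
      language \<sigma>1 = language \<sigma>2 \<and> subst_matrix \<sigma>1 = subst_matrix \<sigma>2"
    and S2: "is_subst \<sigma>2" and P1: "primitive_mat (subst_matrix \<sigma>1)"
    and s2: "\<And>g. \<sigma>2 g = l # tl (\<sigma>2 g)"
    and X: "\<And>g. pos (\<sigma>1 g) = fnorm (finv w' @ (l, False) # pos (\<sigma>2 g) @ (l, True) # w')"
  shows "language \<sigma>1 = language \<sigma>2 \<and> subst_matrix \<sigma>1 = subst_matrix \<sigma>2"
proof -
  define \<sigma>3 where "\<sigma>3 g = tl (\<sigma>2 g) @ [l]" for g
  have E: "pos (\<sigma>1 g) = fnorm (finv w' @ pos (\<sigma>3 g) @ w')" for g
  proof -
    define t where "t = tl (\<sigma>2 g)"
    have t: "\<sigma>2 g = l # t" unfolding t_def by (rule s2)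
    have "pos (\<sigma>1 g) = fnorm (finv w' @ [(l, False), (l, True)] @ (pos t @ (l, True) # w'))"
      using X[of g] by (simp add: t pos_Cons)
    also have "\<dots> = fnorm (finv w' @ (pos t @ (l, True) # w'))"
      using fnorm_cancel[of "finv w'" "(l, False)"] by simp
    finally show ?thesis by (simp add: \<sigma>3_def t pos_append pos_Cons)
  qed
  have S3: "is_subst \<sigma>3" by (simp add: is_subst_def \<sigma>3_def)
  have I: "language \<sigma>1 = language \<sigma>3 \<and> subst_matrix \<sigma>1 = subst_matrix \<sigma>3"
    using IH[OF S3] E by blast
  have M: "subst_matrix \<sigma>3 = subst_matrix \<sigma>2"
  proof (rule mat_eq)
    fix g
    define t where "t = tl (\<sigma>2 g)"
    have t: "\<sigma>2 g = l # t" unfolding t_def by (rule s2)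
    show "\<forall>a. count_list (\<sigma>3 g) a = count_list (\<sigma>2 g) a" by (simp add: \<sigma>3_def t)
  qed
  have P3: "primitive_mat (subst_matrix \<sigma>3)" using I P1 by simp
  have P2: "primitive_mat (subst_matrix \<sigma>2)" using P3 M by simp
  have r: "\<sigma>3 g = tl (\<sigma>2 g) @ [l]" for g by (simp add: \<sigma>3_def)
  have "language \<sigma>2 = language \<sigma>3"
    using elem[OF S2 S3 prim_ext(1)[OF S2 P2] prim_ext(2)[OF S3 P3] s2 r] .
  then show ?thesis using I M by simp
qed

lemma step_F:
  assumes IH: "\<And>\<sigma>2. is_subst \<sigma>2 \<Longrightarrow> (\<forall>g. pos (\<sigma>1 g) = fnorm (finv w' @ pos (\<sigma>2 g) @ w')) \<Longrightarrow>
      language \<sigma>1 = language \<sigma>2 \<and> subst_matrix \<sigma>1 = subst_matrix \<sigma>2"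
    and S2: "is_subst \<sigma>2" and P1: "primitive_mat (subst_matrix \<sigma>1)"
    and s2: "\<And>g. \<sigma>2 g = butlast (\<sigma>2 g) @ [l]"
    and X: "\<And>g. pos (\<sigma>1 g) = fnorm (finv w' @ (l, True) # pos (\<sigma>2 g) @ (l, False) # w')"
  shows "language \<sigma>1 = language \<sigma>2 \<and> subst_matrix \<sigma>1 = subst_matrix \<sigma>2"
proof -
  define \<sigma>3 where "\<sigma>3 g = l # butlast (\<sigma>2 g)" for g
  have E: "pos (\<sigma>1 g) = fnorm (finv w' @ pos (\<sigma>3 g) @ w')" for g
  proof -
    define t where "t = butlast (\<sigma>2 g)"
    have t: "\<sigma>2 g = t @ [l]" unfolding t_def by (rule s2)
    have "pos (\<sigma>1 g) = fnorm ((finv w' @ (l, True) # pos t) @ [(l, True), (l, False)] @ w')"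
      using X[of g] by (simp add: t pos_Cons pos_append)
    also have "\<dots> = fnorm ((finv w' @ (l, True) # pos t) @ w')"
      using fnorm_cancel[of "finv w' @ (l, True) # pos t" "(l, True)"] by simp
    finally show ?thesis by (simp add: \<sigma>3_def t pos_append pos_Cons)
  qed
  have S3: "is_subst \<sigma>3" by (simp add: is_subst_def \<sigma>3_def)
  have I: "language \<sigma>1 = language \<sigma>3 \<and> subst_matrix \<sigma>1 = subst_matrix \<sigma>3"
    using IH[OF S3] E by blast
  have M: "subst_matrix \<sigma>3 = subst_matrix \<sigma>2"
  proof (rule mat_eq)
    fix g
    define t where "t = butlast (\<sigma>2 g)"
    have t: "\<sigma>2 g = t @ [l]" unfolding t_def by (rule s2)
    show "\<forall>a. count_list (\<sigma>3 g) a = count_list (\<sigma>2 g) a" by (simp add: \<sigma>3_def t)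
  qed
  have P3: "primitive_mat (subst_matrix \<sigma>3)" using I P1 by simp
  have P2: "primitive_mat (subst_matrix \<sigma>2)" using P3 M by simp
  have r: "\<sigma>3 g = l # butlast (\<sigma>2 g)" for g by (simp add: \<sigma>3_def)
  have "language \<sigma>3 = language \<sigma>2"
    using elem[OF S3 S2 prim_ext(1)[OF S3 P3] prim_ext(2)[OF S2 P2] r s2] .
  then show ?thesis using I M by simp
qed



lemma main_ind:
  assumes "reduced w" "is_subst \<sigma>1" "is_subst \<sigma>2" "primitive_mat (subst_matrix \<sigma>1)"
    "\<forall>g. pos (\<sigma>1 g) = fnorm (finv w @ pos (\<sigma>2 g) @ w)"
  shows "language \<sigma>1 = language \<sigma>2 \<and> subst_matrix \<sigma>1 = subst_matrix \<sigma>2"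
  using assms
proof (induction w arbitrary: \<sigma>2)
  case Nil
  have "\<sigma>1 g = \<sigma>2 g" for g
  proof -
    have "pos (\<sigma>1 g) = pos (\<sigma>2 g)"
      using Nil.prems(5) fnorm_id[OF reduced_pos, of "\<sigma>2 g"] by simp
    then have "map (\<lambda>x. (x, True)) (\<sigma>1 g) = map (\<lambda>x. (x, True)) (\<sigma>2 g)" by (simp add: pos_def)
    then show ?thesis by (rule map_injective) (auto intro: injI)
  qed
  then have "\<sigma>1 = \<sigma>2" by blast
  then show ?case by simp
next
  case (Cons e w')
  obtain l b where e: "e = (l, b)" by (cases e)
  have rw': "reduced w'" using Cons.prems(1) by (simp add: reduced_Cons)
  have hdw: "w' \<noteq> [] \<Longrightarrow> \<not> canc (l, b) (hd w')" using Cons.prems(1) e by (simp add: reduced_Cons)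
  have X: "pos (\<sigma>1 g) = fnorm (finv w' @ (l, \<not> b) # pos (\<sigma>2 g) @ (l, b) # w')" for g
    using Cons.prems(5) e by (simp add: finv_Cons)
  have ne2: "\<sigma>2 g \<noteq> []" for g using Cons.prems(3) by (simp add: is_subst_def)
  have redX: "reduced (finv w' @ (l, \<not> b) # pos (\<sigma>2 g) @ (l, b) # w')"
    if "b \<Longrightarrow> hd (\<sigma>2 g) \<noteq> l" "\<not> b \<Longrightarrow> last (\<sigma>2 g) \<noteq> l" for g
  proof -
    have pne: "pos (\<sigma>2 g) \<noteq> []" using ne2[of g] by (simp add: pos_ne)
    have r1: "reduced ((l, b) # w')" using Cons.prems(1) e by simp
    have c1: "\<not> canc (last (pos (\<sigma>2 g))) (l, b)"
      using that(2) ne2[of g] by (cases b) (simp_all add: last_pos canc_def)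
    have r2: "reduced (pos (\<sigma>2 g) @ (l, b) # w')"
      using r1 c1 reduced_pos[of "\<sigma>2 g"] pne by (simp add: reduced_append)
    have c2: "\<not> canc (l, \<not> b) (hd (pos (\<sigma>2 g) @ (l, b) # w'))"
      using that(1) ne2[of g] pne by (cases b) (simp_all add: hd_pos canc_def)
    have r3: "reduced ((l, \<not> b) # pos (\<sigma>2 g) @ (l, b) # w')"
      using r2 c2 by (simp add: reduced_Cons)
    have c3: "w' \<noteq> [] \<Longrightarrow> \<not> canc (last (finv w')) (l, \<not> b)"
      using hdw by (simp add: last_finv canc_def)
    show ?thesis using r3 c3 reduced_finv[OF rw'] by (simp add: reduced_append)
  qed
  have IH: "\<And>\<sigma>2. is_subst \<sigma>2 \<Longrightarrow> (\<forall>g. pos (\<sigma>1 g) = fnorm (finv w' @ pos (\<sigma>2 g) @ w')) \<Longrightarrow>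
      language \<sigma>1 = language \<sigma>2 \<and> subst_matrix \<sigma>1 = subst_matrix \<sigma>2"
    using Cons.IH[OF rw' Cons.prems(2) _ Cons.prems(4)] by blast
  show ?case
  proof (cases b)
    case True
    show ?thesis
    proof (cases "\<forall>g. hd (\<sigma>2 g) = l")
      case False
      then obtain g where g: "hd (\<sigma>2 g) \<noteq> l" by blast
      have "(l, False) \<in> set (finv w' @ (l, \<not> b) # pos (\<sigma>2 g) @ (l, b) # w')" using True by simp
      then show ?thesis using pos_contra[OF X[of g] redX[of g]] g True by blast
    next
      case hd: True
      have s2: "\<sigma>2 g = l # tl (\<sigma>2 g)" for g
      proof -
        obtain c r where "\<sigma>2 g = c # r" using ne2[of g] by (cases "\<sigma>2 g") auto
        moreover have "hd (\<sigma>2 g) = l" using hd by blast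
        ultimately show ?thesis by simp
      qed
      have Xb: "pos (\<sigma>1 g) = fnorm (finv w' @ (l, False) # pos (\<sigma>2 g) @ (l, True) # w')" for g
        using X[of g] \<open>b\<close> by simp
      show ?thesis by (rule step_T[OF IH Cons.prems(3) Cons.prems(4) s2 Xb])
    qed
  next
    case False
    show ?thesis
    proof (cases "\<forall>g. last (\<sigma>2 g) = l")
      case lf: False
      then obtain g where g: "last (\<sigma>2 g) \<noteq> l" by blast
      have "(l, False) \<in> set (finv w' @ (l, \<not> b) # pos (\<sigma>2 g) @ (l, b) # w')" using False by simp
      then show ?thesis using pos_contra[OF X[of g] redX[of g]] g False by blast
    next
      case lst: True
      have s2: "\<sigma>2 g = butlast (\<sigma>2 g) @ [l]" for g
      proof -
        obtain c r where "\<sigma>2 g = r @ [c]" using ne2[of g] by (cases "\<sigma>2 g" rule: rev_cases) auto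
        moreover have "last (\<sigma>2 g) = l" using lst by blast
        ultimately show ?thesis by simp
      qed
      have Xb: "pos (\<sigma>1 g) = fnorm (finv w' @ (l, True) # pos (\<sigma>2 g) @ (l, False) # w')" for g
        using X[of g] \<open>\<not> b\<close> by simp
      show ?thesis by (rule step_F[OF IH Cons.prems(3) Cons.prems(4) s2 Xb])
    qed
  qed
qed

theorem mainTheorem1:
  fixes \<sigma>1 \<sigma>2 :: subst and w :: fword
  assumes "is_subst \<sigma>1" and "is_subst \<sigma>2"
    and "is_automorphism \<sigma>1" and "is_automorphism \<sigma>2"
    and "primitive_mat (subst_matrix \<sigma>1)"
    and "unimodular (subst_matrix \<sigma>1)"
    and "irreducible (map_poly rat_of_int (char_poly (subst_matrix \<sigma>1)))"
    and "pisot (pf_eigenvalue (subst_matrix \<sigma>1))"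
    and "w \<in> F3"
    and "\<forall>g. pos (\<sigma>1 g) = fmult (fmult (finv w) (pos (\<sigma>2 g))) w"
  shows "language \<sigma>1 = language \<sigma>2"
proof -
  have "\<forall>g. pos (\<sigma>1 g) = fnorm (finv w @ pos (\<sigma>2 g) @ w)"
    using assms(10) by (simp add: fmult_def fnorm_left)
  then show ?thesis
    using main_ind[of w \<sigma>1 \<sigma>2] assms(1,2,5,9) by (simp add: F3_def)
qed


end
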